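(* Let $n\ge 2$ be an integer, $s=n^2$, $r=n(n-1)$, $m_1=\frac{(n-1)(n-2)}{2}$ and $m_2=\frac{n(n+1)}{2}$. Let $A\in\mathbb{R}^{s\times s}$ be the strictly lower triangular matrix of the optimal third-order method SSPERK$(n^2,3)$: for rows $1\le i\le m_2$, $a_{ij}=\frac1r$ for $j<i$; for rows $m_2<i\le n^2$, $a_{ij}=\frac1r$ for $j\le m_1$, $a_{ij}=\frac{1}{n(2n-1)}$ for $m_1<j\le m_2$, $a_{ij}=\frac1r$ for $m_2<j<i$; and $a_{ij}=0$ for $j\ge i$. Let $c=A\mathbf e$ and $\tilde b=\frac1{n^2}\mathbf e$. Then the explicit Runge--Kutta method $(A,\tilde b)$ has order two ($\tilde b^T\mathbf e=1$, $\tilde b^Tc=\frac12$), it is non-defective, i.e. it violates both third-order conditions: $\tilde b^Tc^2\neq\frac13$ and $\tilde b^T\big(\frac{c^2}{2}-Ac\big)\neq 0$, and its SSP coefficient is positive.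
   Context: An explicit $s$-stage Runge--Kutta method with strictly lower triangular coefficient matrix $A$ and weight vector $b$ is denoted $(A,b)$; $\mathbf e=(1,\dots,1)^T$, $c=A\mathbf e$, and powers of vectors such as $c^2$ are taken componentwise. SSP coefficient: with $K=\begin{pmatrix}A&0\\ b^T&0\end{pmatrix}\in\mathbb{R}^{(s+1)\times(s+1)}$, the SSP coefficient of $(A,b)$ is $\mathcal C(A,b)=\sup\{r\ge 0:\ (I+rK)^{-1}\text{ exists},\ K(I+rK)^{-1}\ge 0,\ rK(I+rK)^{-1}\mathbf e\le \mathbf e\}$, inequalities taken componentwise. *)

theory Defs
  imports Complex_Main "HOL-Library.Extended_Real"
begin

text \<open>Matrices and vectors are represented as functions on natural-number indices,
  with 1-based indices; an s-stage method uses indices 1..s, and the SSP matrix K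
  uses indices 1..s+1.\<close>

definition mat_mul :: "nat \<Rightarrow> (nat \<Rightarrow> nat \<Rightarrow> real) \<Rightarrow> (nat \<Rightarrow> nat \<Rightarrow> real) \<Rightarrow> nat \<Rightarrow> nat \<Rightarrow> real" where
  "mat_mul N X Y i j = (\<Sum>k = 1..N. X i k * Y k j)"

definition id_mat :: "nat \<Rightarrow> nat \<Rightarrow> real" where
  "id_mat i j = (if i = j then 1 else 0)"

definition rk_c :: "nat \<Rightarrow> (nat \<Rightarrow> nat \<Rightarrow> real) \<Rightarrow> nat \<Rightarrow> real" where
  "rk_c s A i = (\<Sum>j = 1..s. A i j)"

text \<open>K = [[A, 0], [b^T, 0]], of size (s+1) x (s+1)\<close>
definition ssp_K :: "nat \<Rightarrow> (nat \<Rightarrow> nat \<Rightarrow> real) \<Rightarrow> (nat \<Rightarrow> real) \<Rightarrow> nat \<Rightarrow> nat \<Rightarrow> real" where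
  "ssp_K s A b i j = (if j \<le> s then (if i \<le> s then A i j else b j) else 0)"

definition ssp_admissible :: "nat \<Rightarrow> (nat \<Rightarrow> nat \<Rightarrow> real) \<Rightarrow> (nat \<Rightarrow> real) \<Rightarrow> real \<Rightarrow> bool" where
  "ssp_admissible s A b r \<longleftrightarrow> r \<ge> 0 \<and>
     (let N = s + 1; K = ssp_K s A b; P = (\<lambda>i j. id_mat i j + r * K i j) in
      (\<exists>M. (\<forall>i\<in>{1..N}. \<forall>j\<in>{1..N}. mat_mul N P M i j = id_mat i j \<and> mat_mul N M P i j = id_mat i j)
         \<and> (\<forall>i\<in>{1..N}. \<forall>j\<in>{1..N}. mat_mul N K M i j \<ge> 0)
         \<and> (\<forall>i\<in>{1..N}. r * (\<Sum>j = 1..N. mat_mul N K M i j) \<le> 1)))"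

definition ssp_coeff :: "nat \<Rightarrow> (nat \<Rightarrow> nat \<Rightarrow> real) \<Rightarrow> (nat \<Rightarrow> real) \<Rightarrow> ereal" where
  "ssp_coeff s A b = Sup (ereal ` {r. ssp_admissible s A b r})"

definition ssperk_A :: "nat \<Rightarrow> nat \<Rightarrow> nat \<Rightarrow> real" where
  "ssperk_A n i j =
    (let r = real (n * (n - 1)); m1 = (n - 1) * (n - 2) div 2; m2 = n * (n + 1) div 2 in
     if j \<ge> i then 0
     else if i \<le> m2 then 1 / r
     else if j \<le> m1 then 1 / r
     else if j \<le> m2 then 1 / real (n * (2 * n - 1))
     else 1 / r)"

end

theory Submission
  imports Defs
begin


function Mr :: "(nat\<Rightarrow>nat\<Rightarrow>real) \<Rightarrow> real \<Rightarrow> nat \<Rightarrow> nat \<Rightarrow> real" where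
  "Mr K r i j = id_mat i j - r * (\<Sum>k\<in>{1..<i}. K i k * Mr K r k j)"
  by auto
termination by (relation "measure (\<lambda>(K,r,i,j). i)") auto

declare Mr.simps[simp del]

function Mc :: "nat \<Rightarrow> (nat\<Rightarrow>nat\<Rightarrow>real) \<Rightarrow> real \<Rightarrow> nat \<Rightarrow> nat \<Rightarrow> real" where
  "Mc N K r i j = id_mat i j - r * (\<Sum>k\<in>{j<..N}. Mc N K r i k * K k j)"
  by auto
termination by (relation "measure (\<lambda>(N,K,r,i,j). N - j)") auto

declare Mc.simps[simp del]

lemma mat_mul_assoc: "mat_mul N (mat_mul N X Y) Z i j = mat_mul N X (mat_mul N Y Z) i j"
  unfolding mat_mul_def
  apply (simp add: sum_distrib_left sum_distrib_right mult.assoc)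
  by (rule sum.swap)

lemma id_left: "i \<in> {1..N} \<Longrightarrow> (\<Sum>k = 1..N. id_mat i k * Y k) = Y i"
proof -
  assume i: "i \<in> {1..N}"
  have "(\<Sum>k = 1..N. id_mat i k * Y k) = (\<Sum>k = 1..N. if i = k then Y k else 0)"
    by (rule sum.cong) (auto simp: id_mat_def)
  then show ?thesis using i by simp
qed

lemma id_right: "j \<in> {1..N} \<Longrightarrow> (\<Sum>k = 1..N. Y k * id_mat k j) = Y j"
proof -
  assume j: "j \<in> {1..N}"
  have "(\<Sum>k = 1..N. Y k * id_mat k j) = (\<Sum>k = 1..N. if k = j then Y k else 0)"
    by (rule sum.cong) (auto simp: id_mat_def)
  then show ?thesis using j by simp
qed

lemma sum_lower:
  fixes K :: "nat \<Rightarrow> nat \<Rightarrow> real" and N :: nat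
  assumes low: "\<forall>i\<in>{1..N}. \<forall>j\<in>{1..N}. i \<le> j \<longrightarrow> K i j = 0" and i: "i \<in> {1..N}"
  shows "(\<Sum>k = 1..N. K i k * Y k) = (\<Sum>k\<in>{1..<i}. K i k * Y k)"
proof -
  have "(\<Sum>k\<in>{1..<i}. K i k * Y k) = (\<Sum>k = 1..N. K i k * Y k)"
  proof (rule sum.mono_neutral_left)
    show "\<forall>k\<in>{1..N} - {1..<i}. K i k * Y k = 0"
    proof
      fix k assume k: "k \<in> {1..N} - {1..<i}"
      then have "i \<le> k" "k \<in> {1..N}" by auto
      then show "K i k * Y k = 0" using low i by auto
    qed
  qed (use i in auto)
  then show ?thesis by simp
qed

lemma sum_lower2:
  fixes K :: "nat \<Rightarrow> nat \<Rightarrow> real" and N :: nat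
  assumes low: "\<forall>i\<in>{1..N}. \<forall>j\<in>{1..N}. i \<le> j \<longrightarrow> K i j = 0" and j: "j \<in> {1..N}"
  shows "(\<Sum>k = 1..N. Y k * K k j) = (\<Sum>k\<in>{j<..N}. Y k * K k j)"
proof -
  have "(\<Sum>k\<in>{j<..N}. Y k * K k j) = (\<Sum>k = 1..N. Y k * K k j)"
  proof (rule sum.mono_neutral_left)
    show "\<forall>k\<in>{1..N} - {j<..N}. Y k * K k j = 0"
    proof
      fix k assume k: "k \<in> {1..N} - {j<..N}"
      then have "k \<le> j" "k \<in> {1..N}" by auto
      then show "Y k * K k j = 0" using low j by auto
    qed
  qed (use j in auto)
  then show ?thesis by simp
qed

lemma PMr:
  assumes low: "\<forall>i\<in>{1..N}. \<forall>j\<in>{1..N}. i \<le> j \<longrightarrow> K i j = 0"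
    and i: "i \<in> {1..N}" and j: "j \<in> {1..N}"
  shows "mat_mul N (\<lambda>i j. id_mat i j + r * K i j) (Mr K r) i j = id_mat i j"
proof -
  have "mat_mul N (\<lambda>i j. id_mat i j + r * K i j) (Mr K r) i j
     = (\<Sum>k = 1..N. id_mat i k * Mr K r k j) + r * (\<Sum>k = 1..N. K i k * Mr K r k j)"
    unfolding mat_mul_def by (simp add: algebra_simps sum.distrib sum_distrib_left)
  also have "\<dots> = Mr K r i j + r * (\<Sum>k\<in>{1..<i}. K i k * Mr K r k j)"
    using id_left[OF i] sum_lower[OF low i] by simp
  also have "\<dots> = id_mat i j" by (subst (1) Mr.simps) simp
  finally show ?thesis .
qed

lemma McP:
  assumes low: "\<forall>i\<in>{1..N}. \<forall>j\<in>{1..N}. i \<le> j \<longrightarrow> K i j = 0"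
    and i: "i \<in> {1..N}" and j: "j \<in> {1..N}"
  shows "mat_mul N (Mc N K r) (\<lambda>i j. id_mat i j + r * K i j) i j = id_mat i j"
proof -
  have "mat_mul N (Mc N K r) (\<lambda>i j. id_mat i j + r * K i j) i j
     = (\<Sum>k = 1..N. Mc N K r i k * id_mat k j) + r * (\<Sum>k = 1..N. Mc N K r i k * K k j)"
    unfolding mat_mul_def by (simp add: algebra_simps sum.distrib sum_distrib_left)
  also have "\<dots> = Mc N K r i j + r * (\<Sum>k\<in>{j<..N}. Mc N K r i k * K k j)"
    using id_right[OF j] sum_lower2[OF low j] by simp
  also have "\<dots> = id_mat i j" by (subst (1) Mc.simps) simp
  finally show ?thesis .
qed

lemma Mc_eq_Mr:
  assumes low: "\<forall>i\<in>{1..N}. \<forall>j\<in>{1..N}. i \<le> j \<longrightarrow> K i j = 0"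
    and i: "i \<in> {1..N}" and j: "j \<in> {1..N}"
  shows "Mc N K r i j = Mr K r i j"
proof -
  let ?P = "\<lambda>i j. id_mat i j + r * K i j"
  have "Mc N K r i j = mat_mul N (Mc N K r) (mat_mul N ?P (Mr K r)) i j"
  proof -
    have "mat_mul N (Mc N K r) (mat_mul N ?P (Mr K r)) i j = (\<Sum>x = 1..N. Mc N K r i x * id_mat x j)"
      unfolding mat_mul_def[of N "Mc N K r"]
      by (rule sum.cong) (simp_all add: PMr[OF low _ j])
    then show ?thesis using id_right[OF j, of "Mc N K r i"] by simp
  qed
  also have "\<dots> = mat_mul N (mat_mul N (Mc N K r) ?P) (Mr K r) i j"
    by (simp add: mat_mul_assoc)
  also have "\<dots> = Mr K r i j"
  proof -
    have "mat_mul N (mat_mul N (Mc N K r) ?P) (Mr K r) i j = (\<Sum>x = 1..N. id_mat i x * Mr K r x j)"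
      unfolding mat_mul_def[of N "mat_mul N (Mc N K r) ?P"]
      by (rule sum.cong) (simp_all add: McP[OF low i])
    then show ?thesis using id_left[OF i, of "\<lambda>k. Mr K r k j"] by simp
  qed
  finally show ?thesis .
qed

lemma admissible_generic:
  fixes K :: "nat \<Rightarrow> nat \<Rightarrow> real" and N :: nat and r \<alpha> :: real
  assumes low: "\<forall>i\<in>{1..N}. \<forall>j\<in>{1..N}. i \<le> j \<longrightarrow> K i j = 0"
    and nonneg: "\<forall>i\<in>{1..N}. \<forall>j\<in>{1..N}. 0 \<le> K i j"
    and le1: "\<forall>i\<in>{1..N}. \<forall>j\<in>{1..N}. K i j \<le> 1"
    and pos: "\<forall>i\<in>{1..N}. \<forall>j\<in>{1..N}. j < i \<longrightarrow> \<alpha> \<le> K i j"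
    and r0: "r \<ge> 0" and rN: "r * N \<le> \<alpha>" and rN1: "r * N \<le> 1"
  shows "\<exists>M. (\<forall>i\<in>{1..N}. \<forall>j\<in>{1..N}. mat_mul N (\<lambda>i j. id_mat i j + r * K i j) M i j = id_mat i j
                 \<and> mat_mul N M (\<lambda>i j. id_mat i j + r * K i j) i j = id_mat i j)
         \<and> (\<forall>i\<in>{1..N}. \<forall>j\<in>{1..N}. mat_mul N K M i j \<ge> 0)
         \<and> (\<forall>i\<in>{1..N}. r * (\<Sum>j = 1..N. mat_mul N K M i j) \<le> 1)"
proof -
  define X where "X = mat_mul N K (Mr K r)"
  have Mr_X: "Mr K r l j = id_mat l j - r * X l j" if l: "l \<in> {1..N}" for l j
  proof -
    have "Mr K r l j = id_mat l j - r * (\<Sum>k\<in>{1..<l}. K l k * Mr K r k j)"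
      by (subst Mr.simps) simp
    also have "(\<Sum>k\<in>{1..<l}. K l k * Mr K r k j) = X l j"
      unfolding X_def mat_mul_def using sum_lower[OF low l, of "\<lambda>k. Mr K r k j"] by simp
    finally show ?thesis .
  qed
  have X_rec: "X i j = K i j - r * (\<Sum>l = 1..N. K i l * X l j)" if j: "j \<in> {1..N}" for i j
  proof -
    have "X i j = (\<Sum>l = 1..N. K i l * Mr K r l j)" by (simp add: X_def mat_mul_def)
    also have "\<dots> = (\<Sum>l = 1..N. K i l * (id_mat l j - r * X l j))"
      by (rule sum.cong) (simp_all add: Mr_X)
    also have "\<dots> = (\<Sum>l = 1..N. K i l * id_mat l j) - r * (\<Sum>l = 1..N. K i l * X l j)"
      by (simp add: algebra_simps sum_subtractf sum_distrib_left)
    also have "(\<Sum>l = 1..N. K i l * id_mat l j) = K i j" using id_right[OF j] by simp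
    finally show ?thesis .
  qed
  have bnd: "\<forall>j\<in>{1..N}. 0 \<le> X i j \<and> X i j \<le> K i j" if "i \<in> {1..N}" for i
    using that
  proof (induction i rule: less_induct)
    case (less i)
    show ?case
    proof
      fix j assume j: "j \<in> {1..N}"
      have trm: "0 \<le> K i l * X l j \<and> K i l * X l j \<le> K i l * K l j" if l: "l \<in> {1..N}" for l
      proof (cases "l < i")
        case True
        with less.IH[OF True l] j have "0 \<le> X l j" "X l j \<le> K l j" by auto
        moreover have "0 \<le> K i l" using nonneg less.prems l by auto
        ultimately show ?thesis by (simp add: mult_left_mono)
      next
        case False
        then have "K i l = 0" using low less.prems l by auto
        then show ?thesis by simp
      qed
      define S where "S = (\<Sum>l = 1..N. K i l * X l j)"
      have S0: "0 \<le> S" unfolding S_def by (rule sum_nonneg) (use trm in auto)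
      have S1: "S \<le> (\<Sum>l = 1..N. K i l * K l j)" unfolding S_def by (rule sum_mono) (use trm in auto)
      have "r * S \<le> K i j"
      proof (cases "j < i")
        case True
        have "(\<Sum>l = 1..N. K i l * K l j) \<le> (\<Sum>l = 1..N. (1::real))"
        proof (rule sum_mono)
          fix l assume l: "l \<in> {1..N}"
          have "K i l \<le> 1" "K l j \<le> 1" "0 \<le> K i l" "0 \<le> K l j"
            using le1 nonneg less.prems l j by auto
          then show "K i l * K l j \<le> 1" by (simp add: mult_le_one)
        qed
        then have "S \<le> real N" using S1 by simp
        then have "r * S \<le> r * N" using r0 by (simp add: mult_left_mono)
        also have "\<dots> \<le> K i j" using rN pos less.prems j True by fastforce
        finally show ?thesis .
      next
        case False
        have "(\<Sum>l = 1..N. K i l * K l j) = 0"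
        proof (rule sum.neutral, rule ballI)
          fix l assume l: "l \<in> {1..N}"
          show "K i l * K l j = 0"
          proof (cases "l < i")
            case True then have "K l j = 0" using low l j False by auto
            then show ?thesis by simp
          next
            case False then have "K i l = 0" using low l less.prems by auto
            then show ?thesis by simp
          qed
        qed
        then have "S = 0" using S0 S1 by simp
        then show ?thesis using nonneg less.prems j by simp
      qed
      moreover have "X i j = K i j - r * S" unfolding S_def by (rule X_rec[OF j])
      ultimately show "0 \<le> X i j \<and> X i j \<le> K i j" using S0 r0 by simp
    qed
  qed
  show ?thesis
  proof (intro exI conjI ballI)
    fix i j assume "i \<in> {1..N}" "j \<in> {1..N}"
    then show "mat_mul N (\<lambda>i j. id_mat i j + r * K i j) (Mr K r) i j = id_mat i j"
      by (rule PMr[OF low])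
  next
    fix i j assume i: "i \<in> {1..N}" and j: "j \<in> {1..N}"
    have "mat_mul N (Mr K r) (\<lambda>i j. id_mat i j + r * K i j) i j
        = mat_mul N (Mc N K r) (\<lambda>i j. id_mat i j + r * K i j) i j"
      unfolding mat_mul_def by (rule sum.cong) (simp_all add: Mc_eq_Mr[OF low i])
    also have "\<dots> = id_mat i j" by (rule McP[OF low i j])
    finally show "mat_mul N (Mr K r) (\<lambda>i j. id_mat i j + r * K i j) i j = id_mat i j" .
  next
    fix i j assume "i \<in> {1..N}" "j \<in> {1..N}"
    then show "0 \<le> mat_mul N K (Mr K r) i j" using bnd unfolding X_def by auto
  next
    fix i assume i: "i \<in> {1..N}"
    have "(\<Sum>j = 1..N. X i j) \<le> (\<Sum>j = 1..N. (1::real))"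
      by (rule sum_mono) (use bnd[OF i] le1 i in force)
    then have "(\<Sum>j = 1..N. X i j) \<le> real N" by simp
    then have "r * (\<Sum>j = 1..N. X i j) \<le> r * N" using r0 by (simp add: mult_left_mono)
    then show "r * (\<Sum>j = 1..N. mat_mul N K (Mr K r) i j) \<le> 1" using rN1 unfolding X_def by simp
  qed
qed

lemma A_vals:
  "j < i \<Longrightarrow> ssperk_A n i j = 1 / real (n * (n - 1)) \<or> ssperk_A n i j = 1 / real (n * (2 * n - 1))"
  "i \<le> j \<Longrightarrow> ssperk_A n i j = 0"
  unfolding ssperk_A_def Let_def by auto

lemma ssp_pos:
  assumes n: "n \<ge> 2"
  shows "ssp_coeff (n^2) (ssperk_A n) (\<lambda>i. 1 / real (n^2)) > 0"
proof -
  define s where "s = n^2"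
  define K where "K = ssp_K s (ssperk_A n) (\<lambda>i. 1 / real (n^2))"
  define N where "N = s + 1"
  define \<alpha> :: real where "\<alpha> = 1 / (2 * real n ^ 2)"
  define r :: real where "r = 1 / (4 * real n ^ 4)"
  have N2: "real n \<ge> 2" using n by simp
  have nR1: "1 \<le> n * (n - 1)" using n by (cases n) auto
  have nR2: "n * (n - 1) \<le> 2 * n ^ 2" by (cases n) (auto simp: power2_eq_square)
  have nQ1: "1 \<le> n * (2 * n - 1)" using n by (cases n) auto
  have nQ2: "n * (2 * n - 1) \<le> 2 * n ^ 2" by (cases n) (auto simp: power2_eq_square)
  have R1: "1 \<le> real (n * (n - 1))" and R2: "real (n * (n - 1)) \<le> 2 * real n ^ 2"
    using of_nat_mono[OF nR1, where 'a=real] of_nat_mono[OF nR2, where 'a=real] n by (simp_all add: of_nat_diff)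
  have Q1: "1 \<le> real (n * (2 * n - 1))" and Q2: "real (n * (2 * n - 1)) \<le> 2 * real n ^ 2"
    using of_nat_mono[OF nQ1, where 'a=real] of_nat_mono[OF nQ2, where 'a=real] n by (simp_all add: of_nat_diff)
  have n2: "4 \<le> real n ^ 2" using N2 by (metis power_mono numeral_le_iff order_refl zero_le_numeral power2_eq_square num_double numeral_times_numeral)
  have a0: "0 < \<alpha>" using N2 by (simp add: \<alpha>_def)
  have inv_bnd: "\<alpha> \<le> 1 / x \<and> 1 / x \<le> 1" if "1 \<le> x" "x \<le> 2 * real n ^ 2" for x :: real
    using that N2 by (auto simp: \<alpha>_def field_simps)
  have bb: "\<alpha> \<le> 1 / real (n^2) \<and> 1 / real (n^2) \<le> (1::real)"
    by (rule inv_bnd) (use n2 in simp_all)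
  have Avals: "(\<alpha> \<le> ssperk_A n i j \<and> ssperk_A n i j \<le> 1)" if "j < i" for i j
    using A_vals(1)[OF that, of n] inv_bnd[OF R1 R2] inv_bnd[OF Q1 Q2] by auto
  have low: "\<forall>i\<in>{1..N}. \<forall>j\<in>{1..N}. i \<le> j \<longrightarrow> K i j = 0"
    by (auto simp: K_def N_def ssp_K_def A_vals(2))
  have nonneg: "\<forall>i\<in>{1..N}. \<forall>j\<in>{1..N}. 0 \<le> K i j"
  proof (intro ballI)
    fix i j
    show "0 \<le> K i j"
      using Avals[of j i] A_vals(2)[of i j n] bb a0
      by (cases "j < i") (auto simp: K_def ssp_K_def)
  qed
  have le1: "\<forall>i\<in>{1..N}. \<forall>j\<in>{1..N}. K i j \<le> 1"
  proof (intro ballI)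
    fix i j
    show "K i j \<le> 1"
      using Avals[of j i] A_vals(2)[of i j n] bb a0
      by (cases "j < i") (auto simp: K_def ssp_K_def)
  qed
  have pos: "\<forall>i\<in>{1..N}. \<forall>j\<in>{1..N}. j < i \<longrightarrow> \<alpha> \<le> K i j"
    using Avals bb by (auto simp: K_def ssp_K_def N_def)
  have r0: "0 \<le> r" by (simp add: r_def)
  have Nr: "real N = real n ^ 2 + 1" by (simp add: N_def s_def)
  have "real N \<le> 2 * real n ^ 2" using Nr n2 by simp
  then have "r * real N \<le> r * (2 * real n ^ 2)" using r0 by (rule mult_left_mono)
  also have "r * (2 * real n ^ 2) = \<alpha>" using N2 by (simp add: r_def \<alpha>_def field_simps power2_eq_square power4_eq_xxxx)
  finally have rN: "r * real N \<le> \<alpha>" .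
  have "\<alpha> \<le> 1" using n2 by (simp add: \<alpha>_def divide_le_eq)
  with rN have rN1: "r * real N \<le> 1" by simp
  have adm: "ssp_admissible s (ssperk_A n) (\<lambda>i. 1 / real (n^2)) r"
    unfolding ssp_admissible_def Let_def
    using admissible_generic[OF low nonneg le1 pos r0 rN rN1] r0
    by (simp add: K_def N_def)
  have "ereal r \<le> ssp_coeff s (ssperk_A n) (\<lambda>i. 1 / real (n^2))"
    unfolding ssp_coeff_def by (rule Sup_upper) (use adm in auto)
  moreover have "0 < ereal r" using N2 by (simp add: r_def)
  ultimately show ?thesis unfolding s_def by (meson less_le_trans)
qed



lemma sum_shift1: "(\<Sum>i = 1..n. g i) = (\<Sum>k\<in>{0..<n}. g (Suc k))"
  using sum.atLeast1_atMost_eq[of g n] by (simp add: lessThan_atLeast0)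

lemma sum_split: fixes a b c :: nat assumes "a \<le> b" "b \<le> c" shows "(\<Sum>i\<in>{a..<c}. g i) = (\<Sum>i\<in>{a..<b}. g i) + (\<Sum>i\<in>{b..<c}. (g i :: real))"
  by (rule sym, rule sum.atLeastLessThan_concat[OF assms])

lemma sum_shift2: fixes g :: "nat \<Rightarrow> real" shows "(\<Sum>i\<in>{a..<a+m}. g i) = (\<Sum>k\<in>{0..<m}. g (a + k))"
  using sum.shift_bounds_nat_ivl[of g 0 a m] by (simp add: ac_simps)

lemma sum_const_ivl: fixes a b :: nat shows "(\<And>i. a \<le> i \<Longrightarrow> i < b \<Longrightarrow> g i = x) \<Longrightarrow> (\<Sum>i\<in>{a..<b}. g i) = real (b - a) * (x::real)"
proof -
  assume h: "\<And>i. a \<le> i \<Longrightarrow> i < b \<Longrightarrow> g i = x"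
  have "(\<Sum>i\<in>{a..<b}. g i) = (\<Sum>i\<in>{a..<b}. x)" by (rule sum.cong) (auto simp: h)
  then show ?thesis by simp
qed

lemma sum_poly: "(\<Sum>k\<in>{0..<m}. a + b * real k + c * (real k)^2) =
   a * real m + b * (real m * (real m - 1) / 2) + c * ((real m - 1) * real m * (2 * real m - 1) / 6)"
proof (induction m)
  case (Suc m)
  have "(\<Sum>k\<in>{0..<Suc m}. a + b * real k + c * (real k)^2) = (\<Sum>k\<in>{0..<m}. a + b * real k + c * (real k)^2) + (a + b * real m + c * (real m)^2)"
    by simp
  also have "\<dots> = a * real (Suc m) + b * (real (Suc m) * (real (Suc m) - 1) / 2) + c * ((real (Suc m) - 1) * real (Suc m) * (2 * real (Suc m) - 1) / 6)"
    unfolding Suc by (simp add: field_simps power2_eq_square)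
  finally show ?case .
qed simp



lemma orders:
  fixes n :: nat
  assumes n: "n \<ge> 2"
  defines "s \<equiv> n ^ 2"
    and "A \<equiv> ssperk_A n"
    and "b \<equiv> (\<lambda>i::nat. 1 / real (n ^ 2))"
    and "c \<equiv> rk_c (n ^ 2) (ssperk_A n)"
  shows "(\<Sum>i = 1..s. b i) = 1
    \<and> (\<Sum>i = 1..s. b i * c i) = 1 / 2
    \<and> (\<Sum>i = 1..s. b i * (c i) ^ 2) \<noteq> 1 / 3
    \<and> (\<Sum>i = 1..s. b i * ((c i) ^ 2 / 2 - (\<Sum>j = 1..s. A i j * c j))) \<noteq> 0"
proof -
  obtain k where nk: "n = k + 2" using n by (metis add.commute le_Suc_ex)
  define m1 where "m1 = (n - 1) * (n - 2) div 2"
  define m2 where "m2 = n * (n + 1) div 2"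
  define p where "p = n * (n - 1) div 2"
  define R where "R = real (n * (n - 1))"
  define Q where "Q = real (n * (2 * n - 1))"
  define K where "K = real k"
  define B where "B = 1 / real (n ^ 2)"
  have ev: "2 * (x * (x + 1) div 2) = x * (x + 1)" for x :: nat
    by (simp add: dvd_mult_div_cancel)
  have hm1: "2 * m1 = k * (k + 1)" using ev[of k] by (simp add: m1_def nk algebra_simps)
  have hm2: "2 * m2 = (k + 2) * (k + 3)" using ev[of "k+2"] by (simp add: m2_def nk algebra_simps)
  have hp: "2 * p = (k + 1) * (k + 2)" using ev[of "k+1"] by (simp add: p_def nk algebra_simps)
  have m2p: "m2 = p + n" using hm2 hp by (simp add: nk algebra_simps)
  have sp: "s = m2 + p" using hm2 hp by (simp add: s_def nk algebra_simps power2_eq_square)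
  have m1p: "m1 + k + 1 = p" using hm1 hp by (simp add: algebra_simps)
  have m12: "m1 \<le> m2" using m1p m2p by simp
  have rM1: "real m1 = K * (K + 1) / 2" using arg_cong[OF hm1, of real] by (simp add: K_def algebra_simps)
  have rM2: "real m2 = (K + 2) * (K + 3) / 2" using arg_cong[OF hm2, of real] by (simp add: K_def algebra_simps)
  have rP: "real p = (K + 1) * (K + 2) / 2" using arg_cong[OF hp, of real] by (simp add: K_def algebra_simps)
  have rR: "R = (K + 2) * (K + 1)" by (simp add: R_def nk K_def algebra_simps)
  have rQ: "Q = (K + 2) * (2 * K + 3)" by (simp add: Q_def nk K_def algebra_simps)
  have rB: "B = 1 / (K + 2)^2" by (simp add: B_def nk K_def)
  have K0: "K \<ge> 0" by (simp add: K_def algebra_simps)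
  have nz: "K + 1 \<noteq> 0" "K + 2 \<noteq> 0" "2 * K + 3 \<noteq> 0" "K + 3 \<noteq> 0" using K0 by auto
  have Rnz: "R \<noteq> 0" using K0 by (simp add: rR)
  have Qnz: "Q \<noteq> 0" using K0 by (simp add: rQ)
  have Aeq: "A i j = (if i \<le> j then 0 else if i \<le> m2 then 1 / R else if j \<le> m1 then 1 / R
      else if j \<le> m2 then 1 / Q else 1 / R)" for i j
    unfolding A_def ssperk_A_def Let_def m1_def m2_def R_def Q_def by simp
  have cshift: "c i = (\<Sum>j\<in>{0..<s}. A i (Suc j))" for i
    unfolding c_def rk_c_def A_def s_def by (rule sum_shift1)
  have cL: "c (Suc i) = real i / R" if i: "i < m2" for i
  proof -
    have "c (Suc i) = (\<Sum>j\<in>{0..<i}. A (Suc i) (Suc j)) + (\<Sum>j\<in>{i..<s}. A (Suc i) (Suc j))"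
      unfolding cshift by (rule sum_split) (use i sp in auto)
    also have "(\<Sum>j\<in>{0..<i}. A (Suc i) (Suc j)) = real (i - 0) * (1 / R)"
      by (rule sum_const_ivl) (use i in \<open>simp add: Aeq\<close>)
    also have "(\<Sum>j\<in>{i..<s}. A (Suc i) (Suc j)) = real (s - i) * 0"
      by (rule sum_const_ivl) (simp add: Aeq)
    finally show ?thesis by simp
  qed
  have cR: "c (Suc (m2 + t)) = (real p + real t) / R" if t: "t < p" for t
  proof -
    let ?f = "\<lambda>j. A (Suc (m2 + t)) (Suc j)"
    have "c (Suc (m2 + t)) = (\<Sum>j\<in>{0..<m1}. ?f j) + (\<Sum>j\<in>{m1..<s}. ?f j)"
      unfolding cshift by (rule sum_split) (use m12 sp in auto)
    also have "(\<Sum>j\<in>{m1..<s}. ?f j) = (\<Sum>j\<in>{m1..<m2}. ?f j) + (\<Sum>j\<in>{m2..<s}. ?f j)"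
      by (rule sum_split) (use m12 sp in auto)
    also have "(\<Sum>j\<in>{m2..<s}. ?f j) = (\<Sum>j\<in>{m2..<m2+t}. ?f j) + (\<Sum>j\<in>{m2+t..<s}. ?f j)"
      by (rule sum_split) (use t sp in auto)
    also have "(\<Sum>j\<in>{0..<m1}. ?f j) = real (m1 - 0) * (1 / R)"
      by (rule sum_const_ivl) (use m12 in \<open>simp add: Aeq\<close>)
    also have "(\<Sum>j\<in>{m1..<m2}. ?f j) = real (m2 - m1) * (1 / Q)"
      by (rule sum_const_ivl) (simp add: Aeq)
    also have "(\<Sum>j\<in>{m2..<m2+t}. ?f j) = real (m2 + t - m2) * (1 / R)"
      by (rule sum_const_ivl) (simp add: Aeq)
    also have "(\<Sum>j\<in>{m2+t..<s}. ?f j) = real (s - (m2 + t)) * 0"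
      by (rule sum_const_ivl) (simp add: Aeq)
    finally have "c (Suc (m2 + t)) = real m1 / R + (real m2 - real m1) / Q + real t / R"
      using m12 by (simp add: of_nat_diff)
    also have "\<dots> = (real p + real t) / R"
      unfolding rM1 rM2 rP using Rnz Qnz by (simp add: field_simps) (simp add: rR rQ algebra_simps)
    finally show ?thesis .
  qed
  have AcL: "(\<Sum>j = 1..s. A (Suc i) j * c j) = (real i * (real i - 1) / 2) / R^2" if i: "i < m2" for i
  proof -
    let ?g = "\<lambda>j. A (Suc i) (Suc j) * c (Suc j)"
    have "(\<Sum>j = 1..s. A (Suc i) j * c j) = (\<Sum>j\<in>{0..<s}. ?g j)" by (rule sum_shift1)
    also have "\<dots> = (\<Sum>j\<in>{0..<i}. ?g j) + (\<Sum>j\<in>{i..<s}. ?g j)"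
      by (rule sum_split) (use i sp in auto)
    also have "(\<Sum>j\<in>{i..<s}. ?g j) = real (s - i) * 0"
      by (rule sum_const_ivl) (simp add: Aeq)
    also have "(\<Sum>j\<in>{0..<i}. ?g j) = (\<Sum>j\<in>{0..<i}. 0 + (1 / R^2) * real j + 0 * (real j)^2)"
      by (rule sum.cong) (use i in \<open>auto simp: Aeq cL power2_eq_square\<close>)
    also have "\<dots> = (1 / R^2) * (real i * (real i - 1) / 2)" unfolding sum_poly by simp
    finally show ?thesis by simp
  qed
  define D where "D = (real m1 * (real m1 - 1) / 2) / R^2
      + (real m2 * (real m2 - 1) / 2 - real m1 * (real m1 - 1) / 2) / (Q * R)"
  have AcR: "(\<Sum>j = 1..s. A (Suc (m2 + t)) j * c j) = D + (real p * real t + real t * (real t - 1) / 2) / R^2"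
    if t: "t < p" for t
  proof -
    let ?g = "\<lambda>j. A (Suc (m2 + t)) (Suc j) * c (Suc j)"
    let ?h = "\<lambda>j. 0 + (1 / (Q * R)) * real j + 0 * (real j)^2"
    have "(\<Sum>j = 1..s. A (Suc (m2 + t)) j * c j) = (\<Sum>j\<in>{0..<s}. ?g j)" by (rule sum_shift1)
    also have "\<dots> = (\<Sum>j\<in>{0..<m1}. ?g j) + (\<Sum>j\<in>{m1..<s}. ?g j)"
      by (rule sum_split) (use m12 sp in auto)
    also have "(\<Sum>j\<in>{m1..<s}. ?g j) = (\<Sum>j\<in>{m1..<m2}. ?g j) + (\<Sum>j\<in>{m2..<s}. ?g j)"
      by (rule sum_split) (use m12 sp in auto)
    also have "(\<Sum>j\<in>{m2..<s}. ?g j) = (\<Sum>j\<in>{m2..<m2+t}. ?g j) + (\<Sum>j\<in>{m2+t..<s}. ?g j)"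
      by (rule sum_split) (use t sp in auto)
    also have "(\<Sum>j\<in>{m2+t..<s}. ?g j) = real (s - (m2 + t)) * 0"
      by (rule sum_const_ivl) (simp add: Aeq)
    also have "(\<Sum>j\<in>{0..<m1}. ?g j) = (\<Sum>j\<in>{0..<m1}. 0 + (1 / R^2) * real j + 0 * (real j)^2)"
      by (rule sum.cong) (use m12 in \<open>auto simp: Aeq cL power2_eq_square\<close>)
    also have "\<dots> = (1 / R^2) * (real m1 * (real m1 - 1) / 2)" unfolding sum_poly by simp
    also have "(\<Sum>j\<in>{m1..<m2}. ?g j) = (\<Sum>j\<in>{m1..<m2}. ?h j)"
      by (rule sum.cong) (auto simp: Aeq cL)
    also have "\<dots> = (\<Sum>j\<in>{0..<m2}. ?h j) - (\<Sum>j\<in>{0..<m1}. ?h j)"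
      using sum_split[of 0 m1 m2 ?h] m12 by simp
    also have "\<dots> = (1 / (Q * R)) * (real m2 * (real m2 - 1) / 2) - (1 / (Q * R)) * (real m1 * (real m1 - 1) / 2)"
      unfolding sum_poly by simp
    also have "(\<Sum>j\<in>{m2..<m2+t}. ?g j) = (\<Sum>u\<in>{0..<t}. ?g (m2 + u))" by (rule sum_shift2)
    also have "\<dots> = (\<Sum>u\<in>{0..<t}. real p / R^2 + (1 / R^2) * real u + 0 * (real u)^2)"
      by (rule sum.cong) (use t in \<open>auto simp: Aeq cR power2_eq_square add_divide_distrib\<close>)
    also have "\<dots> = real p / R^2 * real t + (1 / R^2) * (real t * (real t - 1) / 2)"
      unfolding sum_poly by simp
    finally have eq: "(\<Sum>j = 1..s. A (Suc (m2 + t)) j * c j) = (1 / R\<^sup>2) * (real m1 * (real m1 - 1) / 2) +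
      ((1 / (Q * R)) * (real m2 * (real m2 - 1) / 2) - (1 / (Q * R)) * (real m1 * (real m1 - 1) / 2) +
       (real p / R\<^sup>2 * real t + (1 / R\<^sup>2) * (real t * (real t - 1) / 2) + real (s - (m2 + t)) * 0))" .
    have "(1 / R\<^sup>2) * (real m1 * (real m1 - 1) / 2) +
      ((1 / (Q * R)) * (real m2 * (real m2 - 1) / 2) - (1 / (Q * R)) * (real m1 * (real m1 - 1) / 2) +
       (real p / R\<^sup>2 * real t + (1 / R\<^sup>2) * (real t * (real t - 1) / 2) + real (s - (m2 + t)) * 0))
      = D + (real p * real t + real t * (real t - 1) / 2) / R^2"
      unfolding D_def using Rnz Qnz by (simp add: field_simps)
    with eq show ?thesis by simp
  qed
  have tot: "(\<Sum>i = 1..s. F i) = (\<Sum>i\<in>{0..<m2}. F (Suc i)) + (\<Sum>t\<in>{0..<p}. F (Suc (m2 + t)))"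
    for F :: "nat \<Rightarrow> real"
  proof -
    have "(\<Sum>i = 1..s. F i) = (\<Sum>i\<in>{0..<s}. F (Suc i))" by (rule sum_shift1)
    also have "\<dots> = (\<Sum>i\<in>{0..<m2}. F (Suc i)) + (\<Sum>i\<in>{m2..<m2+p}. F (Suc i))"
      unfolding sp by (rule sum_split) auto
    also have "(\<Sum>i\<in>{m2..<m2+p}. F (Suc i)) = (\<Sum>t\<in>{0..<p}. F (Suc (m2 + t)))"
      by (rule sum_shift2)
    finally show ?thesis .
  qed
  have bB: "b i = B" for i by (simp add: b_def B_def)
  define NN where "NN = real (n^2)"
  have rNN: "NN = (K + 2)^2" by (simp add: NN_def nk K_def)
  have NNnz: "NN \<noteq> 0" using n by (simp add: NN_def nk)
  have BNN: "B = 1 / NN" by (simp add: B_def NN_def)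
  have T1: "(\<Sum>i = 1..s. b i) = 1" using n by (simp add: b_def s_def)
  have "(\<Sum>i = 1..s. b i * c i) = (\<Sum>i\<in>{0..<m2}. 0 + (B / R) * real i + 0 * (real i)^2)
      + (\<Sum>t\<in>{0..<p}. B * real p / R + (B / R) * real t + 0 * (real t)^2)"
  proof -
    have 1: "(\<Sum>i\<in>{0..<m2}. b (Suc i) * c (Suc i)) = (\<Sum>i\<in>{0..<m2}. 0 + (B / R) * real i + 0 * (real i)^2)"
      by (rule sum.cong) (auto simp: bB cL)
    have 2: "(\<Sum>t\<in>{0..<p}. b (Suc (m2 + t)) * c (Suc (m2 + t))) = (\<Sum>t\<in>{0..<p}. B * real p / R + (B / R) * real t + 0 * (real t)^2)"
    proof (rule sum.cong)
      fix t assume "t \<in> {0..<p}"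
      then show "b (Suc (m2 + t)) * c (Suc (m2 + t)) = B * real p / R + (B / R) * real t + 0 * (real t)^2"
        using cR[of t] by (simp add: bB add_divide_distrib algebra_simps)
    qed simp
    show ?thesis unfolding tot 1 2 ..
  qed
  also have "\<dots> = (B / R) * (real m2 * (real m2 - 1) / 2) + (B * real p / R * real p + (B / R) * (real p * (real p - 1) / 2))"
    unfolding sum_poly by simp
  also have "\<dots> = 1 / 2"
    unfolding BNN rM2 rP using Rnz NNnz by (simp add: field_simps) (simp add: rR rNN algebra_simps power2_eq_square)
  finally have T2: "(\<Sum>i = 1..s. b i * c i) = 1 / 2" .
  have "(\<Sum>i = 1..s. b i * (c i)^2) = (\<Sum>i\<in>{0..<m2}. 0 + 0 * real i + (B / R^2) * (real i)^2)
      + (\<Sum>t\<in>{0..<p}. B * real p^2 / R^2 + (2 * B * real p / R^2) * real t + (B / R^2) * (real t)^2)"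
  proof -
    have 1: "(\<Sum>i\<in>{0..<m2}. b (Suc i) * (c (Suc i))^2) = (\<Sum>i\<in>{0..<m2}. 0 + 0 * real i + (B / R^2) * (real i)^2)"
      by (rule sum.cong) (auto simp: bB cL power_divide)
    have 2: "(\<Sum>t\<in>{0..<p}. b (Suc (m2 + t)) * (c (Suc (m2 + t)))^2) = (\<Sum>t\<in>{0..<p}. B * real p^2 / R^2 + (2 * B * real p / R^2) * real t + (B / R^2) * (real t)^2)"
    proof (rule sum.cong)
      fix t assume "t \<in> {0..<p}"
      then have tp: "t < p" by simp
      show "b (Suc (m2 + t)) * (c (Suc (m2 + t)))^2 = B * real p^2 / R^2 + (2 * B * real p / R^2) * real t + (B / R^2) * (real t)^2"
        unfolding cR[OF tp] bB using Rnz by (simp add: field_simps power2_eq_square)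
    qed simp
    show ?thesis unfolding tot 1 2 ..
  qed
  also have "\<dots> = (B / R^2) * ((real m2 - 1) * real m2 * (2 * real m2 - 1) / 6) + (B * real p^2 / R^2 * real p + (2 * B * real p / R^2) * (real p * (real p - 1) / 2) + (B / R^2) * ((real p - 1) * real p * (2 * real p - 1) / 6))"
    unfolding sum_poly by simp
  also have "\<dots> = B / R^2 * ((real m2 - 1) * real m2 * (2 * real m2 - 1) / 6 + real p^2 * real p + 2 * real p * (real p * (real p - 1) / 2) + (real p - 1) * real p * (2 * real p - 1) / 6)"
    using Rnz by (simp add: field_simps)
  also have "(real m2 - 1) * real m2 * (2 * real m2 - 1) / 6 + real p^2 * real p + 2 * real p * (real p * (real p - 1) / 2) + (real p - 1) * real p * (2 * real p - 1) / 6
     = NN * R^2 / 3 - (K * K + 3 * K - 2) * (K + 2) * R / 12"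
    unfolding rM2 rP rNN rR by (simp add: field_simps power2_eq_square)
  also have "B / R^2 * (NN * R^2 / 3 - (K * K + 3 * K - 2) * (K + 2) * R / 12) = 1 / 3 - (K * K + 3 * K - 2) * (K + 2) / (12 * NN * R)"
    unfolding BNN using Rnz NNnz by (simp add: field_simps power2_eq_square)
  finally have T3: "(\<Sum>i = 1..s. b i * (c i)^2) = 1 / 3 - (K * K + 3 * K - 2) * (K + 2) / (12 * NN * R)" .
  have kk: "k * k + 3 * k \<noteq> 2" by (cases k) auto
  have "K * K + 3 * K \<noteq> 2"
  proof
    assume "K * K + 3 * K = 2"
    then have "real (k * k + 3 * k) = real 2" by (simp add: K_def)
    then have "k * k + 3 * k = 2" by (simp only: of_nat_eq_iff)
    with kk show False by simp
  qed
  then have "(K * K + 3 * K - 2) * (K + 2) / (12 * NN * R) \<noteq> 0" using NNnz nz Rnz by simp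
  then have T3': "(\<Sum>i = 1..s. b i * (c i)^2) \<noteq> 1 / 3" unfolding T3 by simp
  have "(\<Sum>i = 1..s. b i * ((c i)^2 / 2 - (\<Sum>j = 1..s. A i j * c j))) =
      (\<Sum>i\<in>{0..<m2}. 0 + (B / (2 * R^2)) * real i + 0 * (real i)^2)
      + (\<Sum>t\<in>{0..<p}. B * (real p^2 / (2 * R^2) - D) + (B / (2 * R^2)) * real t + 0 * (real t)^2)"
  proof -
    have 1: "(\<Sum>i\<in>{0..<m2}. b (Suc i) * ((c (Suc i))^2 / 2 - (\<Sum>j = 1..s. A (Suc i) j * c j)))
       = (\<Sum>i\<in>{0..<m2}. 0 + (B / (2 * R^2)) * real i + 0 * (real i)^2)"
    proof (rule sum.cong)
      fix i assume "i \<in> {0..<m2}"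
      then have ip: "i < m2" by simp
      show "b (Suc i) * ((c (Suc i))^2 / 2 - (\<Sum>j = 1..s. A (Suc i) j * c j)) = 0 + (B / (2 * R^2)) * real i + 0 * (real i)^2"
        unfolding cL[OF ip] AcL[OF ip] bB using Rnz by (simp add: field_simps power2_eq_square)
    qed simp
    have 2: "(\<Sum>t\<in>{0..<p}. b (Suc (m2 + t)) * ((c (Suc (m2 + t)))^2 / 2 - (\<Sum>j = 1..s. A (Suc (m2 + t)) j * c j)))
       = (\<Sum>t\<in>{0..<p}. B * (real p^2 / (2 * R^2) - D) + (B / (2 * R^2)) * real t + 0 * (real t)^2)"
    proof (rule sum.cong)
      fix t assume "t \<in> {0..<p}"
      then have tp: "t < p" by simp
      show "b (Suc (m2 + t)) * ((c (Suc (m2 + t)))^2 / 2 - (\<Sum>j = 1..s. A (Suc (m2 + t)) j * c j)) = B * (real p^2 / (2 * R^2) - D) + (B / (2 * R^2)) * real t + 0 * (real t)^2"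
        unfolding cR[OF tp] AcR[OF tp] bB using Rnz by (simp add: field_simps power2_eq_square)
    qed simp
    show ?thesis unfolding tot[of "\<lambda>i. b i * ((c i)^2 / 2 - (\<Sum>j = 1..s. A i j * c j))"] 1 2 ..
  qed
  also have "\<dots> = (B / (2 * R^2)) * (real m2 * (real m2 - 1) / 2) + (B * (real p^2 / (2 * R^2) - D) * real p + (B / (2 * R^2)) * (real p * (real p - 1) / 2))"
    unfolding sum_poly by simp
  also have "D = (real m1 * (real m1 - 1) / 2 + (K + 1) * (real m2 + real m1 - 1) / 2) / R^2"
  proof -
    have "(real m2 * (real m2 - 1) / 2 - real m1 * (real m1 - 1) / 2) * R^2 = (K + 1) * (real m2 + real m1 - 1) / 2 * (Q * R)"
      unfolding rM1 rM2 rR rQ by (simp add: field_simps power2_eq_square)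
    then have "(real m2 * (real m2 - 1) / 2 - real m1 * (real m1 - 1) / 2) / (Q * R) = (K + 1) * (real m2 + real m1 - 1) / 2 / R^2"
      using Rnz Qnz by (simp add: field_simps)
    then show ?thesis unfolding D_def by (simp add: add_divide_distrib)
  qed
  also have "(B / (2 * R^2)) * (real m2 * (real m2 - 1) / 2) + (B * (real p^2 / (2 * R^2) - (real m1 * (real m1 - 1) / 2 + (K + 1) * (real m2 + real m1 - 1) / 2) / R^2) * real p + (B / (2 * R^2)) * (real p * (real p - 1) / 2))
     = B / R^2 * (real m2 * (real m2 - 1) / 4 + real p * (real p^2 / 2 - (real m1 * (real m1 - 1) / 2 + (K + 1) * (real m2 + real m1 - 1) / 2)) + real p * (real p - 1) / 4)"
    using Rnz by (simp add: field_simps)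
  also have "real m2 * (real m2 - 1) / 4 + real p * (real p^2 / 2 - (real m1 * (real m1 - 1) / 2 + (K + 1) * (real m2 + real m1 - 1) / 2)) + real p * (real p - 1) / 4
     = R * (K + 2) / 4"
    unfolding rM1 rM2 rP rR by (simp add: field_simps power2_eq_square)
  also have "B / R^2 * (R * (K + 2) / 4) = (K + 2) / (4 * NN * R)"
    unfolding BNN using Rnz NNnz by (simp add: field_simps power2_eq_square)
  finally have T4: "(\<Sum>i = 1..s. b i * ((c i)^2 / 2 - (\<Sum>j = 1..s. A i j * c j))) = (K + 2) / (4 * NN * R)" .
  have T4': "(\<Sum>i = 1..s. b i * ((c i)^2 / 2 - (\<Sum>j = 1..s. A i j * c j))) \<noteq> 0"
    unfolding T4 using NNnz nz Rnz by simp
  show ?thesis using T1 T2 T3' T4' by blast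
qed


theorem mainTheorem2:
  fixes n :: nat
  assumes "n \<ge> 2"
  defines "s \<equiv> n ^ 2"
    and "A \<equiv> ssperk_A n"
    and "b \<equiv> (\<lambda>i::nat. 1 / real (n ^ 2))"
    and "c \<equiv> rk_c (n ^ 2) (ssperk_A n)"
  shows "(\<Sum>i = 1..s. b i) = 1
    \<and> (\<Sum>i = 1..s. b i * c i) = 1 / 2
    \<and> (\<Sum>i = 1..s. b i * (c i) ^ 2) \<noteq> 1 / 3
    \<and> (\<Sum>i = 1..s. b i * ((c i) ^ 2 / 2 - (\<Sum>j = 1..s. A i j * c j))) \<noteq> 0
    \<and> ssp_coeff s A b > 0"
  using orders[OF assms(1)] ssp_pos[OF assms(1)] unfolding s_def A_def b_def c_def by blast

end
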